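(* For every tournament $X$ on $n$ vertices, the Redei–Berge polynomial satisfies $u_X(-m)=(-1)^n u_X(m)$.
   Context: A tournament is a digraph $X=(V,E)$ ($V$ finite, $E\subset\{(u,v)\in V\times V\mid u\ne v\}$) such that for any two distinct vertices $u,v$ exactly one of $(u,v),(v,u)$ lies in $E$. $\Sigma_V$ is the set of bijections $\sigma:[n]\to V$, $X\mathrm{Des}(\sigma)=\{i\in[n-1]\mid(\sigma_i,\sigma_{i+1})\in E\}$; $F_I=\sum x_{i_1}\cdots x_{i_n}$ over $1\le i_1\le\cdots\le i_n$ with $i_j<i_{j+1}$ for $j\in I$; $U_X=\sum_{\sigma\in\Sigma_V}F_{X\mathrm{Des}(\sigma)}$; $u_X(m)$ is the polynomial in $m$ given by $U_X(1,\dots,1,0,\dots)$ with $m$ ones. *)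

theory Defs
  imports "HOL-Combinatorics.Multiset_Permutations" "HOL-Computational_Algebra.Polynomial"
begin

definition tournament :: "'a set \<Rightarrow> ('a \<times> 'a) set \<Rightarrow> bool" where
  "tournament V E \<longleftrightarrow> finite V \<and> E \<subseteq> {(u, v). u \<in> V \<and> v \<in> V \<and> u \<noteq> v} \<and>
     (\<forall>u\<in>V. \<forall>v\<in>V. u \<noteq> v \<longrightarrow> ((u, v) \<in> E \<longleftrightarrow> (v, u) \<notin> E))"

text \<open>A bijection sigma : [n] -> V is encoded as the list [sigma_1, ..., sigma_n]
  (an element of permutations_of_set V). X-descent set, positions in {1..n-1}.\<close>
definition XDes :: "('a \<times> 'a) set \<Rightarrow> 'a list \<Rightarrow> nat set" where
  "XDes E \<sigma> = {i \<in> {1..length \<sigma> - 1}. (\<sigma> ! (i - 1), \<sigma> ! i) \<in> E}"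

text \<open>F_I(1,...,1,0,...) with m ones and degree n: the number of sequences
  1 <= i_1 <= ... <= i_n <= m with i_j < i_(j+1) for j in I
  (sequence stored as a list, i_j = list ! (j-1)).\<close>
definition F_ones :: "nat \<Rightarrow> nat set \<Rightarrow> nat \<Rightarrow> nat" where
  "F_ones n I m = card {is :: nat list. length is = n \<and> set is \<subseteq> {1..m} \<and> sorted is \<and>
       (\<forall>j\<in>I. is ! (j - 1) < is ! j)}"

definition U_ones :: "'a set \<Rightarrow> ('a \<times> 'a) set \<Rightarrow> nat \<Rightarrow> nat" where
  "U_ones V E m = (\<Sum>\<sigma>\<in>permutations_of_set V. F_ones (card V) (XDes E \<sigma>) m)"

definition u_poly :: "'a set \<Rightarrow> ('a \<times> 'a) set \<Rightarrow> real poly" where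
  "u_poly V E = (THE p. \<forall>m::nat. poly p (real m) = real (U_ones V E m))"

end

theory Submission
  imports Defs
begin

lemma strict_count:
  "card {xs::nat list. length xs = n \<and> sorted_wrt (<) xs \<and> set xs \<subseteq> {1..N}} = N choose n"
proof -
  have "bij_betw set {xs::nat list. length xs = n \<and> sorted_wrt (<) xs \<and> set xs \<subseteq> {1..N}}
        {B. B \<subseteq> {1..N} \<and> card B = n}"
  proof (rule bij_betw_byWitness[where f'=sorted_list_of_set])
    show "\<forall>a\<in>{xs::nat list. length xs = n \<and> sorted_wrt (<) xs \<and> set xs \<subseteq> {1..N}}. sorted_list_of_set (set a) = a"
      by (metis (mono_tags, lifting) mem_Collect_eq sorted_list_of_set.idem_if_sorted_distinct strict_sorted_iff)
    show "\<forall>a'\<in>{B. B \<subseteq> {1..N} \<and> card B = n}. set (sorted_list_of_set a') = a'"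
      by (metis (no_types, lifting) finite_atLeastAtMost mem_Collect_eq rev_finite_subset set_sorted_list_of_set)
    show "set ` {xs::nat list. length xs = n \<and> sorted_wrt (<) xs \<and> set xs \<subseteq> {1..N}} \<subseteq> {B. B \<subseteq> {1..N} \<and> card B = n}"
      by (auto simp: strict_sorted_iff distinct_card)
    show "sorted_list_of_set ` {B. B \<subseteq> {1..N} \<and> card B = n} \<subseteq> {xs::nat list. length xs = n \<and> sorted_wrt (<) xs \<and> set xs \<subseteq> {1..N}}"
      using finite_subset by fastforce
  qed
  then show ?thesis using n_subsets[of "{1..N}" n] by (simp add: bij_betw_same_card)
qed


definition wk :: "nat set \<Rightarrow> nat \<Rightarrow> nat" where "wk I t = card ({1..t} - I)"

lemma wk_0[simp]: "wk I 0 = 0" by (simp add: wk_def)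

lemma wk_Suc: "wk I (Suc t) = wk I t + (if Suc t \<in> I then 0 else 1)"
proof -
  have "{1..Suc t} - I = (if Suc t \<in> I then {1..t} - I else insert (Suc t) ({1..t} - I))"
    using le_Suc_eq by auto
  then show ?thesis by (simp add: wk_def)
qed

lemma wk_le: "wk I t \<le> t"
  by (induction t) (auto simp: wk_Suc)

lemma wk_add: "wk I t \<le> wk I (t + d) \<and> wk I (t + d) \<le> wk I t + d"
  by (induction d) (auto simp: wk_Suc)

lemma wk_last: assumes "I \<subseteq> {1..k}" shows "wk I k = k - card I"
proof -
  have "card ({1..k} - I) = card {1..k} - card I"
    using assms by (intro card_Diff_subset) (auto intro: finite_subset)
  then show ?thesis by (simp add: wk_def)
qed

lemma strict_gap:
  assumes "sorted_wrt (<) (js::nat list)" "i \<le> j" "j < length js"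
  shows "js ! i + (j - i) \<le> js ! j"
  using assms(2,3)
proof (induction j)
  case 0 then show ?case by simp
next
  case (Suc j)
  show ?case
  proof (cases "i = Suc j")
    case True then show ?thesis by simp
  next
    case False
    then have "i \<le> j" using Suc by simp
    then have "js ! i + (j - i) \<le> js ! j" using Suc by simp
    moreover have "js ! j < js ! Suc j" using assms(1) Suc.prems
      by (simp add: sorted_wrt_nth_less)
    ultimately show ?thesis using \<open>i \<le> j\<close> by simp
  qed
qed

lemma F_closed:
  assumes I: "I \<subseteq> {1..n-1}"
  shows "F_ones n I m = (m + wk I (n - 1)) choose n"
proof -
  define N where "N = m + wk I (n - 1)"
  define A where "A = {ys :: nat list. length ys = n \<and> set ys \<subseteq> {1..m} \<and> sorted ys \<and>
       (\<forall>j\<in>I. ys ! (j - 1) < ys ! j)}"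
  define B where "B = {xs::nat list. length xs = n \<and> sorted_wrt (<) xs \<and> set xs \<subseteq> {1..N}}"
  define f where "f = (\<lambda>ys::nat list. map (\<lambda>t. ys ! t + wk I t) [0..<n])"
  define g where "g = (\<lambda>js::nat list. map (\<lambda>t. js ! t - wk I t) [0..<n])"
  have wmono: "wk I t \<le> wk I (n-1)" if "t < n" for t
    using wk_add[of I t "n - 1 - t"] that by simp
  have wgap: "wk I (n-1) \<le> wk I t + (n - 1 - t)" if "t < n" for t
    using wk_add[of I t "n - 1 - t"] that by simp
  have "bij_betw f A B"
  proof (rule bij_betw_byWitness[where f'=g])
    show "\<forall>a\<in>A. g (f a) = a"
      by (auto simp: A_def f_def g_def intro!: nth_equalityI)
    show "\<forall>a'\<in>B. f (g a') = a'"
    proof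
      fix js assume "js \<in> B"
      then have js: "length js = n" "sorted_wrt (<) js" "set js \<subseteq> {1..N}" by (auto simp: B_def)
      have "wk I t \<le> js ! t" if "t < n" for t
      proof -
        have "js ! 0 + (t - 0) \<le> js ! t" using strict_gap[OF js(2), of 0 t] js(1) that by simp
        moreover have "js ! 0 \<in> set js" using js(1) that by simp
        then have "js ! 0 \<ge> 1" using js(3) by auto
        ultimately show ?thesis using wk_le[of I t] by simp
      qed
      then show "f (g js) = js" using js(1) by (auto simp: f_def g_def intro!: nth_equalityI)
    qed
    show "f ` A \<subseteq> B"
    proof
      fix js assume "js \<in> f ` A"
      then obtain ys where ys: "ys \<in> A" and jsd: "js = f ys" by auto
      have il: "length ys = n" "set ys \<subseteq> {1..m}" "sorted ys" "\<forall>j\<in>I. ys ! (j - 1) < ys ! j"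
        using ys by (auto simp: A_def)
      have len: "length js = n" by (simp add: jsd f_def)
      have nth: "js ! t = ys ! t + wk I t" if "t < n" for t using that by (simp add: jsd f_def)
      have "sorted_wrt (<) js"
        unfolding sorted_wrt_iff_nth_Suc_transp[OF transp_on_less]
      proof (intro allI impI)
        fix t assume t: "Suc t < length js"
        have le: "ys ! t \<le> ys ! Suc t" using il(3) t len il(1) by (simp add: sorted_iff_nth_Suc)
        show "js ! t < js ! Suc t"
        proof (cases "Suc t \<in> I")
          case True
          then have "ys ! t < ys ! Suc t" using il(4) by force
          then show ?thesis using t len nth[of t] nth[of "Suc t"] by (simp add: wk_Suc True)
        next
          case False
          then show ?thesis using le t len nth[of t] nth[of "Suc t"] by (simp add: wk_Suc)
        qed
      qed
      moreover have "set js \<subseteq> {1..N}"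
      proof
        fix x assume "x \<in> set js"
        then obtain t where t: "t < n" "x = js ! t" using len by (auto simp: in_set_conv_nth)
        have "ys ! t \<in> set ys" using il(1) t(1) by simp
        then have "ys ! t \<in> {1..m}" using il(2) by blast
        then show "x \<in> {1..N}" using t nth[of t] wmono[of t] by (auto simp: N_def)
      qed
      ultimately show "js \<in> B" using len by (simp add: B_def)
    qed
    show "g ` B \<subseteq> A"
    proof
      fix ys assume "ys \<in> g ` B"
      then obtain js where "js \<in> B" and isd: "ys = g js" by auto
      then have js: "length js = n" "sorted_wrt (<) js" "set js \<subseteq> {1..N}" by (auto simp: B_def)
      have len: "length ys = n" by (simp add: isd g_def)
      have nth: "ys ! t = js ! t - wk I t" if "t < n" for t using that by (simp add: isd g_def)
      have lo: "t + 1 \<le> js ! t" if "t < n" for t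
      proof -
        have "js ! 0 + (t - 0) \<le> js ! t" using strict_gap[OF js(2), of 0 t] js(1) that by simp
        moreover have "js ! 0 \<in> set js" using js(1) that by simp
        then have "js ! 0 \<ge> 1" using js(3) by auto
        ultimately show ?thesis by simp
      qed
      have hi: "js ! t + (n - 1 - t) \<le> N" if "t < n" for t
      proof -
        have "js ! t + (n - 1 - t) \<le> js ! (n - 1)" using strict_gap[OF js(2), of t "n-1"] js(1) that by simp
        moreover have "js ! (n - 1) \<in> set js" using js(1) that by simp
        then have "js ! (n - 1) \<le> N" using js(3) by auto
        ultimately show ?thesis by simp
      qed
      have "set ys \<subseteq> {1..m}"
      proof
        fix x assume "x \<in> set ys"
        then obtain t where t: "t < n" "x = ys ! t" using len by (auto simp: in_set_conv_nth)
        show "x \<in> {1..m}" using t nth[of t] lo[of t] hi[of t] wgap[of t] wk_le[of I t]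
          by (auto simp: N_def)
      qed
      moreover have "sorted ys"
        unfolding sorted_iff_nth_Suc
      proof (intro allI impI)
        fix t assume t: "Suc t < length ys"
        have "js ! t < js ! Suc t" using js t len by (simp add: sorted_wrt_nth_less)
        then show "ys ! t \<le> ys ! Suc t"
          using t len nth[of t] nth[of "Suc t"] lo[of t] wk_le[of I t] by (auto simp: wk_Suc)
      qed
      moreover have "\<forall>j\<in>I. ys ! (j - 1) < ys ! j"
      proof
        fix j assume j: "j \<in> I"
        then obtain t where jt: "j = Suc t" "Suc t < n" using I by (cases j) auto
        have "js ! t < js ! Suc t" using js jt len by (simp add: sorted_wrt_nth_less)
        then show "ys ! (j - 1) < ys ! j"
          using jt j nth[of t] nth[of "Suc t"] lo[of t] wk_le[of I t] by (auto simp: wk_Suc)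
      qed
      ultimately show "ys \<in> A" using len by (simp add: A_def)
    qed
  qed
  then have "card A = card B" by (rule bij_betw_same_card)
  moreover have "card B = N choose n" unfolding B_def by (rule strict_count)
  ultimately show ?thesis by (simp add: F_ones_def A_def N_def)
qed

definition pk :: "nat \<Rightarrow> nat \<Rightarrow> real poly" where
  "pk n k = smult (1 / fact n) (\<Prod>i<n. [:real i - real k, 1:])"

lemma poly_pk: "poly (pk n k) x = pochhammer (x - real k) n / fact n"
  by (simp add: pk_def poly_prod pochhammer_prod lessThan_atLeast0 algebra_simps)

lemma pk_nat:
  assumes "k \<le> n - 1"
  shows "poly (pk n k) (real m) = real ((m + (n - 1 - k)) choose n)"
proof (cases "n = 0")
  case True then show ?thesis by (simp add: poly_pk)
next
  case False
  have "real ((m + (n - 1 - k)) choose n) = real (m + (n - 1 - k)) gchoose n"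
    by (rule binomial_gbinomial)
  also have "\<dots> = pochhammer (real (m + (n - 1 - k)) - real n + 1) n / fact n"
    by (rule gbinomial_pochhammer')
  also have "real (m + (n - 1 - k)) - real n + 1 = real m - real k"
    using assms False by (simp add: of_nat_diff)
  finally show ?thesis by (simp add: poly_pk)
qed

lemma pk_refl:
  assumes "k \<le> n - 1"
  shows "poly (pk n k) (- x) = (-1) ^ n * poly (pk n (n - 1 - k)) x"
proof (cases "n = 0")
  case True then show ?thesis by (simp add: poly_pk)
next
  case False
  have e: "x - real (n - 1 - k) = (x + real k) - real n + 1"
    using assms False by (simp add: of_nat_diff)
  have "pochhammer (x - real (n - 1 - k)) n = (-1) ^ n * pochhammer (- x - real k) n"
    unfolding e pochhammer_minus' by simp
  then have "(-1) ^ n * pochhammer (x - real (n - 1 - k)) n = ((-1) ^ n * (-1) ^ n) * pochhammer (- x - real k) n"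
    by simp
  also have "(-1::real) ^ n * (-1) ^ n = 1" by (simp flip: power_add)
  finally show ?thesis by (simp add: poly_pk)
qed

lemma XDes_sub: "XDes E \<sigma> \<subseteq> {1..length \<sigma> - 1}"
  by (auto simp: XDes_def)

lemma XDes_rev:
  assumes T: "tournament V E" and s: "\<sigma> \<in> permutations_of_set V"
  shows "card (XDes E (rev \<sigma>)) = length \<sigma> - 1 - card (XDes E \<sigma>)"
proof -
  define n where "n = length \<sigma>"
  have sv: "set \<sigma> = V" "distinct \<sigma>" using s by (auto simp: permutations_of_set_def)
  have key: "(\<sigma> ! j, \<sigma> ! (j - 1)) \<in> E \<longleftrightarrow> (\<sigma> ! (j - 1), \<sigma> ! j) \<notin> E" if j: "j \<in> {1..n-1}" for j
  proof -
    have "\<sigma> ! (j - 1) \<in> V" "\<sigma> ! j \<in> V" using j sv(1) by (auto simp: n_def)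
    moreover have "\<sigma> ! (j - 1) \<noteq> \<sigma> ! j" using j sv(2) by (auto simp: n_def nth_eq_iff_index_eq)
    ultimately show ?thesis using T unfolding tournament_def by metis
  qed
  have mem: "i \<in> XDes E (rev \<sigma>) \<longleftrightarrow> i \<in> {1..n-1} \<and> n - i \<notin> XDes E \<sigma>" for i
  proof (cases "i \<in> {1..n-1}")
    case True
    have a: "rev \<sigma> ! (i - 1) = \<sigma> ! (n - i)" "rev \<sigma> ! i = \<sigma> ! (n - i - 1)"
      using True by (auto simp: rev_nth n_def Suc_diff_Suc)
    have "n - i \<in> {1..n-1}" using True by auto
    then show ?thesis using True key[of "n - i"] a by (auto simp: XDes_def n_def)
  next
    case False then show ?thesis by (auto simp: XDes_def n_def)
  qed
  have "XDes E (rev \<sigma>) = (\<lambda>j. n - j) ` ({1..n-1} - XDes E \<sigma>)"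
  proof (rule set_eqI)
    fix i
    show "i \<in> XDes E (rev \<sigma>) \<longleftrightarrow> i \<in> (\<lambda>j. n - j) ` ({1..n-1} - XDes E \<sigma>)"
    proof
      assume "i \<in> XDes E (rev \<sigma>)"
      then have "i \<in> {1..n-1}" "n - i \<notin> XDes E \<sigma>" using mem by auto
      then show "i \<in> (\<lambda>j. n - j) ` ({1..n-1} - XDes E \<sigma>)"
        by (intro image_eqI[where x="n - i"]) auto
    next
      assume "i \<in> (\<lambda>j. n - j) ` ({1..n-1} - XDes E \<sigma>)"
      then obtain j where "j \<in> {1..n-1}" "j \<notin> XDes E \<sigma>" "i = n - j" by auto
      then show "i \<in> XDes E (rev \<sigma>)" using mem[of i] by (auto simp: Suc_diff_Suc)
    qed
  qed
  moreover have "inj_on (\<lambda>j. n - j) ({1..n-1} - XDes E \<sigma>)"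
    by (auto simp: inj_on_def)
  moreover have "card ({1..n-1} - XDes E \<sigma>) = n - 1 - card (XDes E \<sigma>)"
    using XDes_sub[of E \<sigma>] by (subst card_Diff_subset) (auto simp: n_def intro: finite_subset)
  ultimately show ?thesis by (simp add: card_image n_def)
qed

theorem mainTheorem18:
  fixes V :: "'a set" and E :: "('a \<times> 'a) set" and n :: nat
  assumes "tournament V E" and "card V = n"
  shows "\<forall>x::real. poly (u_poly V E) (- x) = (-1) ^ n * poly (u_poly V E) x"
proof -
  define PS where "PS = permutations_of_set V"
  have finV: "finite V" using assms(1) by (simp add: tournament_def)
  have finPS: "finite PS" using finV by (simp add: PS_def)
  have lenPS: "length \<sigma> = n" if "\<sigma> \<in> PS" for \<sigma>
    using that assms(2) by (auto simp: PS_def permutations_of_set_def distinct_card[symmetric])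
  have dle: "card (XDes E \<sigma>) \<le> n - 1" if "\<sigma> \<in> PS" for \<sigma>
    using card_mono[OF _ XDes_sub[of E \<sigma>]] lenPS[OF that] by simp
  define P where "P = (\<Sum>\<sigma>\<in>PS. pk n (card (XDes E \<sigma>)))"
  have Pnat: "poly P (real m) = real (U_ones V E m)" for m
  proof -
    have "poly P (real m) = (\<Sum>\<sigma>\<in>PS. poly (pk n (card (XDes E \<sigma>))) (real m))"
      by (simp add: P_def poly_sum)
    also have "\<dots> = (\<Sum>\<sigma>\<in>PS. real (F_ones (card V) (XDes E \<sigma>) m))"
    proof (rule sum.cong[OF refl])
      fix \<sigma> assume s: "\<sigma> \<in> PS"
      have sub: "XDes E \<sigma> \<subseteq> {1..n-1}" using XDes_sub[of E \<sigma>] lenPS[OF s] by simp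
      show "poly (pk n (card (XDes E \<sigma>))) (real m) = real (F_ones (card V) (XDes E \<sigma>) m)"
        using F_closed[OF sub, of m] wk_last[OF sub] pk_nat[OF dle[OF s], of m] assms(2) by simp
    qed
    also have "\<dots> = real (U_ones V E m)" by (simp add: U_ones_def PS_def)
    finally show ?thesis .
  qed
  have uP: "u_poly V E = P"
    unfolding u_poly_def
  proof (rule the_equality)
    show "\<forall>m::nat. poly P (real m) = real (U_ones V E m)" using Pnat by simp
    fix q assume q: "\<forall>m::nat. poly q (real m) = real (U_ones V E m)"
    show "q = P"
    proof (rule ccontr)
      assume "q \<noteq> P"
      then have "q - P \<noteq> 0" by simp
      then have fin: "finite {x. poly (q - P) x = 0}" by (rule poly_roots_finite)
      have "range real \<subseteq> {x. poly (q - P) x = 0}" using q Pnat by auto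
      then have "finite (range (real :: nat \<Rightarrow> real))" using fin finite_subset by blast
      then show False using finite_imageD[of real UNIV] by (simp add: inj_on_def)
    qed
  qed
  have bij: "bij_betw rev PS PS"
    by (rule bij_betw_byWitness[where f'=rev]) (auto simp: PS_def permutations_of_set_def)
  show ?thesis
  proof
    fix x :: real
    have "poly P (- x) = (\<Sum>\<sigma>\<in>PS. poly (pk n (card (XDes E \<sigma>))) (- x))"
      by (simp add: P_def poly_sum)
    also have "\<dots> = (\<Sum>\<sigma>\<in>PS. (-1) ^ n * poly (pk n (card (XDes E (rev \<sigma>)))) x)"
    proof (rule sum.cong[OF refl])
      fix \<sigma> assume s: "\<sigma> \<in> PS"
      show "poly (pk n (card (XDes E \<sigma>))) (- x) = (-1) ^ n * poly (pk n (card (XDes E (rev \<sigma>)))) x"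
        using pk_refl[OF dle[OF s], of x] XDes_rev[OF assms(1), of \<sigma>] s lenPS[OF s]
        by (simp add: PS_def)
    qed
    also have "\<dots> = (-1) ^ n * (\<Sum>\<sigma>\<in>PS. poly (pk n (card (XDes E (rev \<sigma>)))) x)"
      by (simp add: sum_distrib_left)
    also have "(\<Sum>\<sigma>\<in>PS. poly (pk n (card (XDes E (rev \<sigma>)))) x) = (\<Sum>\<sigma>\<in>PS. poly (pk n (card (XDes E \<sigma>))) x)"
      using sum.reindex_bij_betw[OF bij, of "\<lambda>\<sigma>. poly (pk n (card (XDes E \<sigma>))) x"] by simp
    also have "\<dots> = poly P x" by (simp add: P_def poly_sum)
    finally show "poly (u_poly V E) (- x) = (-1) ^ n * poly (u_poly V E) x" by (simp add: uP)
  qed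
qed

end
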